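(* Let $\mathcal{U}$ be a separable Banach space with dual $\mathcal{U}^*$ and duality pairing $[\cdot,\cdot]$, endowed with a quadratic norm given by a linear bijection $\mathcal{K}:\mathcal{U}^*\to\mathcal{U}$ which is symmetric and positive, $\|u\|^2=[\mathcal{K}^{-1}u,u]$. Let $\phi_1,\dots,\phi_N\in\mathcal{U}^*$ be nontrivial, $\boldsymbol{\phi}=(\phi_1,\dots,\phi_N)$, and $\Theta\in\mathbb{R}^{N\times N}$ with $\Theta_{i,n}=[\phi_i,\mathcal{K}\phi_n]$, assumed invertible; let $\chi_i=\sum_{n=1}^N(\Theta^{-1})_{i,n}\mathcal{K}\phi_n$. Let $G:\mathbb{R}^N\to\mathbb{R}^I$ and $F:\mathbb{R}^N\to\mathbb{R}^M$ be (possibly nonlinear) functions, $\gamma$ a nonzero real parameter, and fix $(\mathbf{o},\mathbf{y})\in\mathbb{R}^I\times\mathbb{R}^M$. Then $u^\dagger\in\mathcal{U}$ is a minimizer of $$\min_{u\in\mathcal{U}}\ \|u\|^2+\frac{1}{\gamma^2}|G([\boldsymbol{\phi},u])-\mathbf{o}|^2\quad\text{s.t.}\quad F([\boldsymbol{\phi},u])=\mathbf{y}$$ if and only if $u^\dagger=\sum_{n=1}^N z^\dagger_n\chi_n$ where $\mathbf{z}^\dagger$ is a minimizer of $$\min_{\mathbf{z}\in\mathbb{R}^N}\ \mathbf{z}^T\Theta^{-1}\mathbf{z}+\frac{1}{\gamma^2}|G(\mathbf{z})-\mathbf{o}|^2\quad\text{s.t.}\quad F(\mathbf{z})=\mathb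f{y}.$$
   Context: Symmetric means $[\mathcal{K}\phi,\varphi]=[\mathcal{K}\varphi,\phi]$ and positive means $[\mathcal{K}\phi,\phi]>0$ for $\phi\ne0$. $[\boldsymbol{\phi},u]$ denotes the vector $([\phi_1,u],\dots,[\phi_N,u])\in\mathbb{R}^N$; $|\cdot|$ is the Euclidean norm. *)

theory Defs
  imports "HOL-Analysis.Analysis"
begin

end

theory Submission
  imports Defs
begin

theorem proposition2p3:
  fixes K :: "('u::banach \<Rightarrow>\<^sub>L real) \<Rightarrow> 'u"
    and \<phi> :: "'n::finite \<Rightarrow> ('u \<Rightarrow>\<^sub>L real)"
    and \<Theta> :: "real ^ 'n ^ 'n"
    and chi :: "'n \<Rightarrow> 'u"
    and G :: "real ^ 'n \<Rightarrow> real ^ 'i::finite"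
    and F :: "real ^ 'n \<Rightarrow> real ^ 'm::finite"
    and \<gamma> :: real
    and obs :: "real ^ 'i" and y :: "real ^ 'm"
    and u\<^sub>0 :: 'u
  assumes separable: "separable_space (euclidean :: 'u topology)"
    and K_linear: "linear K"
    and K_bij: "bij K"
    and K_sym: "\<And>\<psi> \<rho>. blinfun_apply \<rho> (K \<psi>) = blinfun_apply \<psi> (K \<rho>)"
    and K_pos: "\<And>\<psi>. \<psi> \<noteq> 0 \<Longrightarrow> blinfun_apply \<psi> (K \<psi>) > 0"
    and norm_K: "\<And>u. (norm u)\<^sup>2 = blinfun_apply (inv K u) u"
    and \<phi>_nontriv: "\<And>n. \<phi> n \<noteq> 0"
    and \<Theta>_def: "\<And>i n. \<Theta> $ i $ n = blinfun_apply (\<phi> i) (K (\<phi> n))"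
    and \<Theta>_inv: "invertible \<Theta>"
    and chi_def: "\<And>i. chi i = (\<Sum>n\<in>UNIV. (matrix_inv \<Theta> $ i $ n) *\<^sub>R K (\<phi> n))"
    and \<gamma>_nz: "\<gamma> \<noteq> 0"
  shows "(F (\<chi> n. blinfun_apply (\<phi> n) u\<^sub>0) = y \<and>
          (\<forall>u. F (\<chi> n. blinfun_apply (\<phi> n) u) = y \<longrightarrow>
             (norm u\<^sub>0)\<^sup>2 + (1 / \<gamma>\<^sup>2) * (norm (G (\<chi> n. blinfun_apply (\<phi> n) u\<^sub>0) - obs))\<^sup>2
             \<le> (norm u)\<^sup>2 + (1 / \<gamma>\<^sup>2) * (norm (G (\<chi> n. blinfun_apply (\<phi> n) u) - obs))\<^sup>2))
     \<longleftrightarrow>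
     (\<exists>z\<^sub>0 :: real ^ 'n.
        u\<^sub>0 = (\<Sum>n\<in>UNIV. z\<^sub>0 $ n *\<^sub>R chi n) \<and>
        F z\<^sub>0 = y \<and>
        (\<forall>z. F z = y \<longrightarrow>
           z\<^sub>0 \<bullet> (matrix_inv \<Theta> *v z\<^sub>0) + (1 / \<gamma>\<^sup>2) * (norm (G z\<^sub>0 - obs))\<^sup>2
           \<le> z \<bullet> (matrix_inv \<Theta> *v z) + (1 / \<gamma>\<^sup>2) * (norm (G z - obs))\<^sup>2))"
proof -
  define T where "T = matrix_inv \<Theta>"
  define Ki where "Ki = inv K"
  define P where "P = (\<lambda>u. (\<chi> n. blinfun_apply (\<phi> n) u) :: real ^ 'n)"
  define S where "S = (\<lambda>z::real^'n. (\<Sum>n\<in>UNIV. z $ n *\<^sub>R chi n))"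
  have KKi: "K (Ki u) = u" for u using K_bij by (simp add: Ki_def bij_is_surj surj_f_inv_f)
  have KiK: "Ki (K p) = p" for p using K_bij by (simp add: Ki_def bij_is_inj inv_f_f)
  have Ki_add: "Ki (a + b) = Ki a + Ki b" for a b
  proof -
    have "K (Ki a + Ki b) = a + b" using K_linear KKi by (simp add: linear_add)
    then show ?thesis by (metis KiK)
  qed
  have Ki_scale: "Ki (c *\<^sub>R a) = c *\<^sub>R Ki a" for c a
  proof -
    have "K (c *\<^sub>R Ki a) = c *\<^sub>R a" using K_linear KKi by (simp add: linear_scale)
    then show ?thesis by (metis KiK)
  qed
  have Ki_diff: "Ki (a - b) = Ki a - Ki b" for a b
    by (metis Ki_add add_diff_cancel diff_add_cancel)
  have TT: "\<Theta> ** T = mat 1 \<and> T ** \<Theta> = mat 1"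
    using \<Theta>_inv unfolding T_def matrix_inv_def invertible_def by (rule someI_ex)
  have ThS: "transpose \<Theta> = \<Theta>"
    by (simp add: transpose_def vec_eq_iff \<Theta>_def K_sym)
  have "transpose T = transpose T ** (\<Theta> ** T)" using TT by simp
  also have "\<dots> = (transpose T ** \<Theta>) ** T" by (simp add: matrix_mul_assoc)
  also have "transpose T ** \<Theta> = transpose (\<Theta> ** T)"
    by (metis ThS matrix_transpose_mul)
  also have "\<dots> = mat 1" using TT by (simp add: transpose_mat)
  finally have Tsym0: "transpose T = T" by simp
  have Tsym: "T $ i $ j = T $ j $ i" for i j
    using Tsym0 by (metis transpose_def vec_lambda_beta)
  have delta: "(\<Sum>n\<in>UNIV. \<Theta>$i$n * T$n$j) = (if i = j then 1 else 0)" for i j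
  proof -
    have "(\<Theta> ** T) $ i $ j = (if i = j then 1 else 0)" using TT by (simp add: mat_def)
    then show ?thesis by (simp add: matrix_matrix_mult_def)
  qed
  have L1: "blinfun_apply (\<phi> i) (S z) = z $ i" for i z
  proof -
    have chi_i: "blinfun_apply (\<phi> i) (chi j) = (if i = j then 1 else 0)" for j
    proof -
      have "blinfun_apply (\<phi> i) (chi j) = (\<Sum>n\<in>UNIV. T$j$n * \<Theta>$i$n)"
        by (simp add: chi_def T_def blinfun.sum_right blinfun.scaleR_right \<Theta>_def)
      also have "\<dots> = (\<Sum>n\<in>UNIV. \<Theta>$i$n * T$n$j)" by (simp add: Tsym mult.commute)
      finally show ?thesis using delta by simp
    qed
    have "blinfun_apply (\<phi> i) (S z) = (\<Sum>j\<in>UNIV. z$j * blinfun_apply (\<phi> i) (chi j))"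
      by (simp add: S_def blinfun.sum_right blinfun.scaleR_right)
    also have "\<dots> = z $ i" by (simp add: chi_i if_distrib cong: if_cong)
    finally show ?thesis .
  qed
  have PS: "P (S z) = z" for z by (simp add: P_def L1 vec_eq_iff)
  have Salt: "S z = K (\<Sum>n\<in>UNIV. (T *v z)$n *\<^sub>R \<phi> n)" for z
  proof -
    have "K (\<Sum>n\<in>UNIV. (T *v z)$n *\<^sub>R \<phi> n) = (\<Sum>n\<in>UNIV. (T *v z)$n *\<^sub>R K (\<phi> n))"
      using K_linear by (simp add: linear_sum linear_scale)
    also have "\<dots> = (\<Sum>n\<in>UNIV. (\<Sum>j\<in>UNIV. z$j * T$j$n) *\<^sub>R K (\<phi> n))"
      by (simp add: matrix_vector_mult_def Tsym mult.commute)
    also have "\<dots> = (\<Sum>n\<in>UNIV. \<Sum>j\<in>UNIV. z$j *\<^sub>R (T$j$n *\<^sub>R K (\<phi> n)))"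
      by (simp add: scaleR_sum_left)
    also have "\<dots> = (\<Sum>j\<in>UNIV. \<Sum>n\<in>UNIV. z$j *\<^sub>R (T$j$n *\<^sub>R K (\<phi> n)))"
      by (rule sum.swap)
    also have "\<dots> = S z"
      by (simp add: S_def chi_def T_def scaleR_sum_right)
    finally show ?thesis by simp
  qed
  have KiS: "Ki (S z) = (\<Sum>n\<in>UNIV. (T *v z)$n *\<^sub>R \<phi> n)" for z
    by (simp add: Salt KiK)
  have KiS_app: "blinfun_apply (Ki (S z)) (S z') = z' \<bullet> (T *v z)" for z z'
    by (simp add: KiS blinfun.sum_left blinfun.scaleR_left L1 inner_vec_def mult.commute)
  have L2: "(norm (S z))\<^sup>2 = z \<bullet> (T *v z)" for z
    using norm_K[of "S z"] KiS_app[of z z] by (simp add: Ki_def)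
  have L3: "(norm u)\<^sup>2 = (norm (S (P u)))\<^sup>2 + (norm (u - S (P u)))\<^sup>2" for u
  proof -
    define v where "v = S (P u)"
    define d where "d = u - v"
    have ud: "u = v + d" by (simp add: d_def)
    have zero: "blinfun_apply (Ki v) d = 0"
    proof -
      have "blinfun_apply (\<phi> n) d = 0" for n
        using L1[of n "P u"] by (simp add: d_def v_def blinfun.diff_right P_def)
      then show ?thesis by (simp add: v_def KiS blinfun.sum_left blinfun.scaleR_left)
    qed
    have sym: "blinfun_apply (Ki d) v = blinfun_apply (Ki v) d"
      using K_sym[of "Ki d" "Ki v"] by (simp add: KKi)
    have "(norm u)\<^sup>2 = blinfun_apply (Ki u) u" using norm_K by (simp add: Ki_def)
    also have "\<dots> = blinfun_apply (Ki v) v + blinfun_apply (Ki v) d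
        + blinfun_apply (Ki d) v + blinfun_apply (Ki d) d"
      by (simp add: ud Ki_add blinfun.add_right blinfun.add_left)
    also have "\<dots> = (norm v)\<^sup>2 + (norm d)\<^sup>2"
      using zero sym norm_K[of v] norm_K[of d] by (simp add: Ki_def)
    finally show ?thesis by (simp add: v_def d_def)
  qed
  define c where "c = 1 / \<gamma>\<^sup>2"
  define J where "J = (\<lambda>u. (norm u)\<^sup>2 + c * (norm (G (P u) - obs))\<^sup>2)"
  define j where "j = (\<lambda>z. z \<bullet> (T *v z) + c * (norm (G z - obs))\<^sup>2)"
  have JS: "J (S z) = j z" for z by (simp add: J_def j_def PS L2)
  have Jge: "j (P u) \<le> J u" for u
    using L3[of u] L2[of "P u"] by (simp add: J_def j_def)
  have Jeq: "J u \<le> j (P u) \<Longrightarrow> u = S (P u)" for u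
    using L3[of u] L2[of "P u"] by (simp add: J_def j_def)
  have "(F (P u\<^sub>0) = y \<and> (\<forall>u. F (P u) = y \<longrightarrow> J u\<^sub>0 \<le> J u))
     \<longleftrightarrow> (\<exists>z\<^sub>0. u\<^sub>0 = S z\<^sub>0 \<and> F z\<^sub>0 = y \<and> (\<forall>z. F z = y \<longrightarrow> j z\<^sub>0 \<le> j z))"
  proof
    assume A: "F (P u\<^sub>0) = y \<and> (\<forall>u. F (P u) = y \<longrightarrow> J u\<^sub>0 \<le> J u)"
    have "J u\<^sub>0 \<le> J (S (P u\<^sub>0))" using A PS by simp
    then have "u\<^sub>0 = S (P u\<^sub>0)" using JS Jeq by simp
    moreover have "\<forall>z. F z = y \<longrightarrow> j (P u\<^sub>0) \<le> j z"
      using A PS JS Jge by (metis order_trans)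
    ultimately show "\<exists>z\<^sub>0. u\<^sub>0 = S z\<^sub>0 \<and> F z\<^sub>0 = y \<and> (\<forall>z. F z = y \<longrightarrow> j z\<^sub>0 \<le> j z)"
      using A by blast
  next
    assume "\<exists>z\<^sub>0. u\<^sub>0 = S z\<^sub>0 \<and> F z\<^sub>0 = y \<and> (\<forall>z. F z = y \<longrightarrow> j z\<^sub>0 \<le> j z)"
    then obtain z\<^sub>0 where B: "u\<^sub>0 = S z\<^sub>0" "F z\<^sub>0 = y" "\<forall>z. F z = y \<longrightarrow> j z\<^sub>0 \<le> j z" by blast
    show "F (P u\<^sub>0) = y \<and> (\<forall>u. F (P u) = y \<longrightarrow> J u\<^sub>0 \<le> J u)"
      using B PS JS Jge by (metis order_trans)
  qed
  then show ?thesis by (simp add: J_def j_def P_def S_def c_def T_def)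
qed

end
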